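(* Let $\Gamma=(G,\sigma)$ be a signed graph with vertex measure $\mu$, edge weight $w$ and potential $\kappa$, and let $\lambda_k^{(p)}$ be the $k$-th variational eigenvalue of its $p$-Laplacian. Let $\eta_k^{(p)}$ be the $k$-th variational eigenvalue of the $p$-Laplacian of $(G,\sigma)$ with the same $w$ and $\mu$ but with potential $\kappa'\equiv 0$. Then for every $p\ge 1$ and $1\le k\le n$, $$\eta_k^{(p)}-\mathcal C\le\lambda_k^{(p)}\le\eta_k^{(p)}+\mathcal C,\qquad \mathcal C:=\max_{1\le i\le n}\left|\frac{\kappa_i}{\mu_i}\right|.$$
   Context: $G=(V,E)$ is a finite undirected graph without self-loops, $V=\{1,\dots,n\}$. A signed graph $\Gamma=(G,\sigma)$ has signature $\sigma:E\to\{\pm1\}$, $\sigma_{ij}=\sigma(\{i,j\})$, edge weight $w:E\to(0,\infty)$, vertex measure $\mu:V\to(0,\infty)$, potential $\kappa:V\to\mathbb R$. For $p\ge1$ and nonzero $f:V\to\mathbb R$, $\mathcal R_p^\sigma(f)=\frac{\sum_{\{i,j\}\in E}w_{ij}|f(i)-\sigma_{ij}f(j)|^p+\sum_i\kappa_i|f(i)|^p}{\sum_i\mu_i|f(i)|^p}$; $\mathcal S_p=\{f:\sum_i\mu_i|f(i)|^p=1\}$. For a closed symmetric set $B\subset\mathbb R^n\setminus\{0\}$, the Krasnoselskii genus $\gamma(B)$ is the least $k$ such that an odd continuous map $B\to\mathbb R^k\setminus\{0\}$ exists. $\mathcal F_k(\mathcal S_p)$ = closed symmetric $B\subset\mathcal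 S_p$ with $\gamma(B)\ge k$. The $k$-th variational eigenvalue is $\lambda_k^{(p)}=\min_{B\in\mathcal F_k(\mathcal S_p)}\max_{f\in B}\mathcal R_p^\sigma(f)$. *)

theory Defs
  imports "HOL-Analysis.Analysis"
begin

text \<open>Vertices are the elements of a finite type 'n (so V = UNIV, n = CARD('n));
 functions f : V -> R are vectors in real^'n. The graph is given by a set E of
 2-element vertex sets (undirected, no loops).\<close>

definition edge_energy ::
  "'n::finite set set \<Rightarrow> ('n set \<Rightarrow> real) \<Rightarrow> ('n set \<Rightarrow> real) \<Rightarrow> real \<Rightarrow> real^'n \<Rightarrow> real" where
  "edge_energy E w \<sigma> p f =
     (\<Sum>e\<in>E. w e * (SOME t. \<exists>i j. e = {i, j} \<and> i \<noteq> j \<and> t = \<bar>f$i - \<sigma> e * f$j\<bar> powr p))"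

definition p_norm_mu :: "('n::finite \<Rightarrow> real) \<Rightarrow> real \<Rightarrow> real^'n \<Rightarrow> real" where
  "p_norm_mu \<mu> p f = (\<Sum>i\<in>UNIV. \<mu> i * \<bar>f$i\<bar> powr p)"

definition rayleigh ::
  "'n::finite set set \<Rightarrow> ('n set \<Rightarrow> real) \<Rightarrow> ('n set \<Rightarrow> real) \<Rightarrow> ('n \<Rightarrow> real) \<Rightarrow> ('n \<Rightarrow> real)
     \<Rightarrow> real \<Rightarrow> real^'n \<Rightarrow> real" where
  "rayleigh E w \<sigma> \<kappa> \<mu> p f =
     (edge_energy E w \<sigma> p f + (\<Sum>i\<in>UNIV. \<kappa> i * \<bar>f$i\<bar> powr p)) / p_norm_mu \<mu> p f"

definition p_sphere :: "('n::finite \<Rightarrow> real) \<Rightarrow> real \<Rightarrow> (real^'n) set" where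
  "p_sphere \<mu> p = {f. p_norm_mu \<mu> p f = 1}"

text \<open>An odd continuous map B -> R^k \ {0}, written componentwise as k real functions.\<close>
definition odd_map_exists :: "(real^'n::finite) set \<Rightarrow> nat \<Rightarrow> bool" where
  "odd_map_exists B k \<longleftrightarrow> (\<exists>g :: nat \<Rightarrow> real^'n \<Rightarrow> real.
      (\<forall>i<k. continuous_on B (g i) \<and> (\<forall>x\<in>B. g i (- x) = - g i x)) \<and>
      (\<forall>x\<in>B. \<exists>i<k. g i x \<noteq> 0))"

text \<open>Krasnoselskii genus (infinite if no such map exists).\<close>
definition kr_genus :: "(real^'n::finite) set \<Rightarrow> enat" where
  "kr_genus B = (INF k\<in>{k. odd_map_exists B k}. enat k)"

definition symmetric_set :: "(real^'n::finite) set \<Rightarrow> bool" where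
  "symmetric_set B \<longleftrightarrow> (\<forall>x\<in>B. - x \<in> B)"

definition genus_family :: "('n::finite \<Rightarrow> real) \<Rightarrow> real \<Rightarrow> nat \<Rightarrow> (real^'n) set set" where
  "genus_family \<mu> p k = {B. B \<subseteq> p_sphere \<mu> p \<and> closed B \<and> symmetric_set B \<and> kr_genus B \<ge> enat k}"

definition var_eigenvalue ::
  "'n::finite set set \<Rightarrow> ('n set \<Rightarrow> real) \<Rightarrow> ('n set \<Rightarrow> real) \<Rightarrow> ('n \<Rightarrow> real) \<Rightarrow> ('n \<Rightarrow> real)
     \<Rightarrow> real \<Rightarrow> nat \<Rightarrow> real" where
  "var_eigenvalue E w \<sigma> \<kappa> \<mu> p k =
     (INF B\<in>genus_family \<mu> p k. SUP f\<in>B. rayleigh E w \<sigma> \<kappa> \<mu> p f)"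

end

theory Submission
  imports Defs
begin

lemma abstract_ineq:
  fixes F :: "'a set set" and R0 Rk :: "'a \<Rightarrow> real"
  assumes ne: "\<forall>B\<in>F. B \<noteq> {}"
    and bnd: "\<forall>B\<in>F. \<forall>f\<in>B. 0 \<le> R0 f \<and> R0 f \<le> K \<and> \<bar>Rk f - R0 f\<bar> \<le> C"
    and C: "0 \<le> C"
  shows "(INF B\<in>F. SUP f\<in>B. R0 f) - C \<le> (INF B\<in>F. SUP f\<in>B. Rk f)
       \<and> (INF B\<in>F. SUP f\<in>B. Rk f) \<le> (INF B\<in>F. SUP f\<in>B. R0 f) + C"
proof (cases "F = {}")
  case True
  then show ?thesis using C by simp
next
  case False
  have b0: "bdd_above (R0 ` B)" if "B \<in> F" for B
    using bnd that by (intro bdd_aboveI[of _ K]) auto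
  have bk: "bdd_above (Rk ` B)" if "B \<in> F" for B
    using bnd that by (intro bdd_aboveI[of _ "K + C"]) force
  have s1: "(SUP f\<in>B. Rk f) \<le> (SUP f\<in>B. R0 f) + C" if B: "B \<in> F" for B
  proof -
    have "(SUP f\<in>B. Rk f) - C \<le> (SUP f\<in>B. R0 f)"
    proof -
      have "(SUP f\<in>B. Rk f) \<le> (SUP f\<in>B. R0 f) + C"
      proof (rule cSUP_least)
        show "B \<noteq> {}" using ne B by auto
        fix f assume f: "f \<in> B"
        have "R0 f \<le> (SUP f\<in>B. R0 f)" by (rule cSUP_upper[OF f b0[OF B]])
        then show "Rk f \<le> (SUP f\<in>B. R0 f) + C" using bnd B f by force
      qed
      then show ?thesis by simp
    qed
    then show ?thesis by simp
  qed
  have s2: "(SUP f\<in>B. R0 f) \<le> (SUP f\<in>B. Rk f) + C" if B: "B \<in> F" for B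
  proof (rule cSUP_least)
    show "B \<noteq> {}" using ne B by auto
    fix f assume f: "f \<in> B"
    have "Rk f \<le> (SUP f\<in>B. Rk f)" by (rule cSUP_upper[OF f bk[OF B]])
    then show "R0 f \<le> (SUP f\<in>B. Rk f) + C" using bnd B f by force
  qed
  have p0: "0 \<le> (SUP f\<in>B. R0 f)" if B: "B \<in> F" for B
  proof -
    obtain f where f: "f \<in> B" using ne B by auto
    have "R0 f \<le> (SUP f\<in>B. R0 f)" by (rule cSUP_upper[OF f b0[OF B]])
    then show ?thesis using bnd B f by force
  qed
  have lb0: "bdd_below ((\<lambda>B. SUP f\<in>B. R0 f) ` F)"
    using p0 by (intro bdd_belowI[of _ 0]) auto
  have lbk: "bdd_below ((\<lambda>B. SUP f\<in>B. Rk f) ` F)"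
    using p0 s2 by (intro bdd_belowI[of _ "- C"]) force
  have i1: "(INF B\<in>F. SUP f\<in>B. R0 f) \<le> (INF B\<in>F. SUP f\<in>B. Rk f) + C"
  proof -
    have "(INF B\<in>F. SUP f\<in>B. R0 f) - C \<le> (INF B\<in>F. SUP f\<in>B. Rk f)"
    proof (rule cINF_greatest[OF False])
      fix B assume B: "B \<in> F"
      have "(INF B\<in>F. SUP f\<in>B. R0 f) \<le> (SUP f\<in>B. R0 f)" by (rule cINF_lower[OF lb0 B])
      then show "(INF B\<in>F. SUP f\<in>B. R0 f) - C \<le> (SUP f\<in>B. Rk f)" using s2[OF B] by simp
    qed
    then show ?thesis by simp
  qed
  have i2: "(INF B\<in>F. SUP f\<in>B. Rk f) - C \<le> (INF B\<in>F. SUP f\<in>B. R0 f)"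
  proof (rule cINF_greatest[OF False])
    fix B assume B: "B \<in> F"
    have "(INF B\<in>F. SUP f\<in>B. Rk f) \<le> (SUP f\<in>B. Rk f)" by (rule cINF_lower[OF lbk B])
    then show "(INF B\<in>F. SUP f\<in>B. Rk f) - C \<le> (SUP f\<in>B. R0 f)" using s1[OF B] by simp
  qed
  show ?thesis using i1 i2 by simp
qed

lemma edge_term_bound:
  fixes f :: "real^'n::finite"
  assumes e: "card e = 2" and s: "s = 1 \<or> s = -1" and p: "p \<ge> 1"
  shows "0 \<le> (SOME t. \<exists>i j. e = {i, j} \<and> i \<noteq> j \<and> t = \<bar>f$i - s * f$j\<bar> powr p)
     \<and> (SOME t. \<exists>i j. e = {i, j} \<and> i \<noteq> j \<and> t = \<bar>f$i - s * f$j\<bar> powr p)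
        \<le> 2 powr p * (\<Sum>l\<in>UNIV. \<bar>f$l\<bar> powr p)"
proof -
  let ?P = "\<lambda>t. \<exists>i j. e = {i, j} \<and> i \<noteq> j \<and> t = \<bar>f$i - s * f$j\<bar> powr p"
  obtain x y where xy: "e = {x, y}" "x \<noteq> y" using e by (auto simp: card_2_iff)
  have "\<exists>t. ?P t" using xy by blast
  then have "?P (SOME t. ?P t)" by (rule someI_ex)
  then obtain i j where ij: "i \<noteq> j" "(SOME t. ?P t) = \<bar>f$i - s * f$j\<bar> powr p" by blast
  define M where "M = max \<bar>f$i\<bar> \<bar>f$j\<bar>"
  have "\<bar>f$i - s * f$j\<bar> \<le> \<bar>f$i\<bar> + \<bar>f$j\<bar>" using s by (auto simp: abs_if)
  also have "\<dots> \<le> 2 * M" unfolding M_def by simp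
  finally have "\<bar>f$i - s * f$j\<bar> powr p \<le> (2 * M) powr p" using p
    by (intro powr_mono2) auto
  also have "\<dots> = 2 powr p * M powr p" unfolding M_def by (simp add: powr_mult)
  also have "M powr p \<le> \<bar>f$i\<bar> powr p + \<bar>f$j\<bar> powr p" unfolding M_def
    by (auto simp: max_def)
  also have "\<bar>f$i\<bar> powr p + \<bar>f$j\<bar> powr p = (\<Sum>l\<in>{i,j}. \<bar>f$l\<bar> powr p)" using ij by simp
  also have "\<dots> \<le> (\<Sum>l\<in>UNIV. \<bar>f$l\<bar> powr p)" by (intro sum_mono2) auto
  finally show ?thesis using ij by simp
qed


theorem proposition4p2:
  fixes E :: "'n::finite set set"
    and \<sigma> w :: "'n set \<Rightarrow> real"
    and \<mu> \<kappa> :: "'n \<Rightarrow> real"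
    and p :: real and k :: nat
  assumes edges: "\<forall>e\<in>E. card e = 2"
    and sig: "\<forall>e\<in>E. \<sigma> e = 1 \<or> \<sigma> e = -1"
    and wpos: "\<forall>e\<in>E. w e > 0"
    and mupos: "\<forall>i. \<mu> i > 0"
    and p: "p \<ge> 1"
    and k: "1 \<le> k" "k \<le> CARD('n)"
  shows "var_eigenvalue E w \<sigma> (\<lambda>_. 0) \<mu> p k - (MAX i\<in>UNIV. \<bar>\<kappa> i / \<mu> i\<bar>)
           \<le> var_eigenvalue E w \<sigma> \<kappa> \<mu> p k
       \<and> var_eigenvalue E w \<sigma> \<kappa> \<mu> p k
           \<le> var_eigenvalue E w \<sigma> (\<lambda>_. 0) \<mu> p k + (MAX i\<in>UNIV. \<bar>\<kappa> i / \<mu> i\<bar>)"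
proof -
  define C where "C = (MAX i\<in>UNIV. \<bar>\<kappa> i / \<mu> i\<bar>)"
  define m where "m = (MIN i\<in>UNIV. \<mu> i)"
  have m: "m > 0" unfolding m_def using mupos by simp
  have mle: "m \<le> \<mu> l" for l unfolding m_def by simp
  have C0: "0 \<le> C" unfolding C_def by (simp add: Max_ge_iff)
  have Cge: "\<bar>\<kappa> i / \<mu> i\<bar> \<le> C" for i unfolding C_def by simp
  define K where "K = (\<Sum>e\<in>E. w e) * 2 powr p / m"
  have finE: "finite E" by (rule finite_subset[of _ UNIV]) auto
  have main: "0 \<le> rayleigh E w \<sigma> (\<lambda>_. 0) \<mu> p f \<and> rayleigh E w \<sigma> (\<lambda>_. 0) \<mu> p f \<le> K
     \<and> \<bar>rayleigh E w \<sigma> \<kappa> \<mu> p f - rayleigh E w \<sigma> (\<lambda>_. 0) \<mu> p f\<bar> \<le> C"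
    if f: "f \<in> p_sphere \<mu> p" for f
  proof -
    have one: "(\<Sum>i\<in>UNIV. \<mu> i * \<bar>f$i\<bar> powr p) = 1"
      using f by (simp add: p_sphere_def p_norm_mu_def)
    define S where "S = (\<Sum>l\<in>UNIV. \<bar>f$l\<bar> powr p)"
    have "m * S = (\<Sum>l\<in>UNIV. m * \<bar>f$l\<bar> powr p)" unfolding S_def by (simp add: sum_distrib_left)
    also have "\<dots> \<le> (\<Sum>i\<in>UNIV. \<mu> i * \<bar>f$i\<bar> powr p)"
      by (intro sum_mono mult_right_mono mle) auto
    finally have mS: "m * S \<le> 1" using one by simp
    have S0: "0 \<le> S" unfolding S_def by (intro sum_nonneg) auto
    let ?t = "\<lambda>e. (SOME t. \<exists>i j. e = {i, j} \<and> i \<noteq> j \<and> t = \<bar>f$i - \<sigma> e * f$j\<bar> powr p)"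
    have tb: "0 \<le> ?t e \<and> ?t e \<le> 2 powr p * S" if "e \<in> E" for e
      unfolding S_def using edge_term_bound[of e "\<sigma> e" p f] edges sig p that by blast
    have E0: "0 \<le> edge_energy E w \<sigma> p f" unfolding edge_energy_def
      using tb wpos by (intro sum_nonneg) (simp add: less_imp_le)
    have "edge_energy E w \<sigma> p f \<le> (\<Sum>e\<in>E. w e * (2 powr p * S))" unfolding edge_energy_def
      using tb wpos by (intro sum_mono mult_left_mono) (auto simp: less_imp_le)
    also have "\<dots> = (\<Sum>e\<in>E. w e) * 2 powr p * S" by (simp add: sum_distrib_right mult.assoc)
    also have "\<dots> \<le> K"
    proof -
      have W: "0 \<le> (\<Sum>e\<in>E. w e) * 2 powr p" using wpos by (simp add: sum_nonneg less_imp_le)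
      have "S \<le> 1 / m" using mS m by (simp add: field_simps)
      then have "(\<Sum>e\<in>E. w e) * 2 powr p * S \<le> (\<Sum>e\<in>E. w e) * 2 powr p * (1 / m)"
        using W by (rule mult_left_mono)
      then show ?thesis unfolding K_def by simp
    qed
    finally have EK: "edge_energy E w \<sigma> p f \<le> K" .
    have "\<bar>\<Sum>i\<in>UNIV. \<kappa> i * \<bar>f$i\<bar> powr p\<bar> \<le> (\<Sum>i\<in>UNIV. \<bar>\<kappa> i * \<bar>f$i\<bar> powr p\<bar>)"
      by (rule sum_abs)
    also have "\<dots> \<le> (\<Sum>i\<in>UNIV. C * (\<mu> i * \<bar>f$i\<bar> powr p))"
    proof (intro sum_mono)
      fix i :: 'n
      have mi: "\<mu> i > 0" using mupos by simp
      have "\<bar>\<kappa> i\<bar> = \<bar>\<kappa> i / \<mu> i\<bar> * \<mu> i" using mi by (simp add: abs_div)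
      also have "\<dots> \<le> C * \<mu> i" using Cge[of i] mi by (intro mult_right_mono) auto
      finally have "\<bar>\<kappa> i\<bar> * \<bar>f$i\<bar> powr p \<le> C * \<mu> i * \<bar>f$i\<bar> powr p"
        by (intro mult_right_mono) auto
      then show "\<bar>\<kappa> i * \<bar>f$i\<bar> powr p\<bar> \<le> C * (\<mu> i * \<bar>f$i\<bar> powr p)"
        by (simp add: abs_mult mult.assoc)
    qed
    also have "\<dots> = C" using one by (simp add: sum_distrib_left[symmetric])
    finally have D: "\<bar>\<Sum>i\<in>UNIV. \<kappa> i * \<bar>f$i\<bar> powr p\<bar> \<le> C" .
    have pn: "p_norm_mu \<mu> p f = 1" using f by (simp add: p_sphere_def)
    show ?thesis using E0 EK D unfolding rayleigh_def pn by simp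
  qed
  have ne: "\<forall>B\<in>genus_family \<mu> p k. B \<noteq> {}"
  proof (intro ballI notI)
    fix B assume B: "B \<in> genus_family \<mu> p k" and Be: "B = {}"
    have "odd_map_exists B 0" unfolding odd_map_exists_def Be by simp
    then have "kr_genus B \<le> enat 0" unfolding kr_genus_def by (intro INF_lower) simp
    moreover have "enat k \<le> kr_genus B" using B by (simp add: genus_family_def)
    ultimately have "enat k \<le> enat 0" by (rule order_trans[rotated])
    then show False using k(1) by simp
  qed
  have bnd: "\<forall>B\<in>genus_family \<mu> p k. \<forall>f\<in>B. 0 \<le> rayleigh E w \<sigma> (\<lambda>_. 0) \<mu> p f
      \<and> rayleigh E w \<sigma> (\<lambda>_. 0) \<mu> p f \<le> K
      \<and> \<bar>rayleigh E w \<sigma> \<kappa> \<mu> p f - rayleigh E w \<sigma> (\<lambda>_. 0) \<mu> p f\<bar> \<le> C"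
    using main by (auto simp: genus_family_def)
  show ?thesis
    using abstract_ineq[OF ne bnd C0] unfolding var_eigenvalue_def C_def by simp
qed

end
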